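(* Let $n\ge1$ and let $f(x):=P(x)+iQ(x)$ with $P(x):=x^n+a_1x^{n-1}+\cdots+a_n$ and $Q(x):=b_1x^{n-1}+\cdots+b_n$ real polynomials. Suppose $f$ has (counting multiplicities) $n_+$ roots with positive imaginary part, $n_-$ roots with negative imaginary part and $n_0<n$ real roots, and let $d:=n-2\min\{n_+,n_-\}$. Then there exist real roots $\mu_1,\ldots,\mu_d$ of $P$ and $\nu_1,\ldots,\nu_{d-1}$ of $Q$ (counting multiplicities) with $\mu_1\le\nu_1\le\mu_2\le\cdots\le\nu_{d-1}\le\mu_d$ (strict inequalities if $n_0=0$) which moreover satisfy: (i) if either $n_->n_+$ and $\lim_{x\to-\infty}P(x)/Q(x)=\infty$, or $n_-<n_+$ and $\lim_{x\to-\infty}P(x)/Q(x)=-\infty$, then $Q$ has an additional real root $\nu_0$ (i.e. $\nu_0,\nu_1,\ldots,\nu_{d-1}$ are roots of $Q$ counting multiplicities) with $\nu_0\le\mu_1$; (ii) if either $n_->n_+$ and $\lim_{x\to\infty}P(x)/Q(x)=-\infty$, or $n_-<n_+$ and $\lim_{x\to\infty}P(x)/Q(x)=\infty$, then $Q$ has an additional real root $\nu_d$ (i.e. $\nu_1,\ldots,\nu_{d-1},\nu_d$ are roots of $Q$ counting multiplicities) with $\nu_d\ge\mu_d$. If $n_0=0$, then $\nu_0<\mu_1$ and $\nu_d>\mu_d$. The same conclusion holds when instead $f(x)=x^n+a_1x^{n-1}+\cdots+a_n$ is a real polynomial with $n_+$ roots of positive real part, $n_-$ roots of negative real part, $n_0<n$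 purely imaginary roots, $d:=n-2\min(n_+,n_-)$, and $P(x):=x^n-a_2x^{n-2}+a_4x^{n-4}-\cdots$, $Q(x):=a_1x^{n-1}-a_3x^{n-3}+a_5x^{n-5}-\cdots$.
   Context: "Counting multiplicities" means that a root of multiplicity $m$ may appear up to $m$ times in the respective list of roots. *)

theory Defs
  imports Complex_Main "HOL-Computational_Algebra.Polynomial"
begin

definition nroots_in :: "complex poly \<Rightarrow> complex set \<Rightarrow> nat" where
  "nroots_in f S = (\<Sum>z\<in>{z. poly f z = 0 \<and> z \<in> S}. order z f)"

text \<open>The list xs consists of real roots of p, counting multiplicities: the product of
  the linear factors (X - x) over the list divides p.\<close>
definition roots_cm :: "real poly \<Rightarrow> real list \<Rightarrow> bool" where
  "roots_cm p xs \<longleftrightarrow> (\<Prod>x\<leftarrow>xs. [:-x, 1:]) dvd p"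

text \<open>The common conclusion of the theorem, for given n, n_+, n_-, n_0, P, Q.
  cond_i / cond_ii are the hypotheses of items (i) and (ii); the extra roots nu0 / nud
  are required to be roots of Q (jointly with nu_1..nu_{d-1}, counting multiplicities)
  only when the respective condition holds.\<close>
definition interlace_concl ::
  "nat \<Rightarrow> nat \<Rightarrow> nat \<Rightarrow> nat \<Rightarrow> real poly \<Rightarrow> real poly \<Rightarrow> bool" where
  "interlace_concl n np nm n0 P Q \<longleftrightarrow>
    (let d = n - 2 * min np nm;
         ci = ((nm > np \<and> filterlim (\<lambda>x. poly P x / poly Q x) at_top at_bot) \<or>
               (nm < np \<and> filterlim (\<lambda>x. poly P x / poly Q x) at_bot at_bot));
         cii = ((nm > np \<and> filterlim (\<lambda>x. poly P x / poly Q x) at_bot at_top) \<or>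
                (nm < np \<and> filterlim (\<lambda>x. poly P x / poly Q x) at_top at_top))
     in \<exists>mu nu nu0 nud.
          length mu = d \<and> length nu = d - 1 \<and>
          roots_cm P mu \<and>
          roots_cm Q ((if ci then [nu0] else []) @ nu @ (if cii then [nud] else [])) \<and>
          (\<forall>i < d - 1. mu ! i \<le> nu ! i \<and> nu ! i \<le> mu ! (i + 1)) \<and>
          (n0 = 0 \<longrightarrow> (\<forall>i < d - 1. mu ! i < nu ! i \<and> nu ! i < mu ! (i + 1))) \<and>
          (ci \<longrightarrow> nu0 \<le> mu ! 0 \<and> (n0 = 0 \<longrightarrow> nu0 < mu ! 0)) \<and>
          (cii \<longrightarrow> mu ! (d - 1) \<le> nud \<and> (n0 = 0 \<longrightarrow> mu ! (d - 1) < nud)))"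

text \<open>For f(x) = x^n + a_1 x^(n-1) + ... + a_n (a_k = coeff f (n-k)):
  P(x) = x^n - a_2 x^(n-2) + a_4 x^(n-4) - ...,
  Q(x) = a_1 x^(n-1) - a_3 x^(n-3) + a_5 x^(n-5) - ... .\<close>
definition even_part :: "nat \<Rightarrow> real poly \<Rightarrow> real poly" where
  "even_part n f = (\<Sum>k\<in>{0..n}. if even k then monom ((-1) ^ (k div 2) * coeff f (n - k)) (n - k) else 0)"

definition odd_part :: "nat \<Rightarrow> real poly \<Rightarrow> real poly" where
  "odd_part n f = (\<Sum>k\<in>{0..n}. if odd k then monom ((-1) ^ (k div 2) * coeff f (n - k)) (n - k) else 0)"

end

theory Submission
  imports Defs "HOL-Computational_Algebra.Fundamental_Theorem_Algebra"
begin

definition lin :: "real \<Rightarrow> real poly" where "lin x = [:-x, 1:]"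

definition Pprod :: "(nat \<Rightarrow> real) \<Rightarrow> nat \<Rightarrow> nat \<Rightarrow> real poly" where
  "Pprod s oo M = prod_list (map (\<lambda>i. lin (s i)) (filter (\<lambda>i. even (i + oo)) [0..<M]))"
definition Qprod :: "(nat \<Rightarrow> real) \<Rightarrow> nat \<Rightarrow> nat \<Rightarrow> real poly" where
  "Qprod s oo M = prod_list (map (\<lambda>i. lin (s i)) (filter (\<lambda>i. odd (i + oo)) [0..<M]))"

definition chain :: "real poly \<Rightarrow> real poly \<Rightarrow> nat \<Rightarrow> nat \<Rightarrow> nat \<Rightarrow> (nat \<Rightarrow> real) \<Rightarrow> bool \<Rightarrow> bool" where
  "chain P Q oo e d s strict \<longleftrightarrow>
     (\<forall>i j. i < j \<and> j < oo + 2*d - 1 + e \<longrightarrow> s i \<le> s j \<and> (strict \<longrightarrow> s i < s j)) \<and>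
     Pprod s oo (oo + 2*d - 1 + e) dvd P \<and> Qprod s oo (oo + 2*d - 1 + e) dvd Q"

lemma filter_upt_Suc: "filter F [0..<Suc m] = filter F [0..<m] @ (if F m then [m] else [])"
  by simp

lemma filt_even: "oo \<le> 1 \<Longrightarrow> filter (\<lambda>i. even (i + oo)) [0..<oo + 2*d] = map (\<lambda>i. oo + 2*i) [0..<d]"
proof (induction d)
  case (Suc d)
  have "oo + 2 * Suc d = Suc (Suc (oo + 2*d))" by simp
  then show ?case using Suc by (auto simp del: upt_Suc simp add: filter_upt_Suc) simp_all
qed (cases oo, auto)

lemma filt_odd: "oo \<le> 1 \<Longrightarrow> filter (\<lambda>i. odd (i + oo)) [0..<oo + 2*d + 1] =
   (if oo = 1 then [0] else []) @ map (\<lambda>i. oo + 2*i + 1) [0..<d]"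
proof (induction d)
  case 0
  then show ?case by (cases oo) auto
next
  case (Suc d)
  have "oo + 2 * Suc d + 1 = Suc (Suc (oo + 2*d + 1))" by simp
  then show ?case using Suc by (auto simp del: upt_Suc simp add: filter_upt_Suc) simp_all
qed

lemma filt_even_M:
  assumes "oo \<le> 1" "e \<le> 1" "d \<ge> 1"
  shows "filter (\<lambda>i. even (i + oo)) [0..<oo + 2*d - 1 + e] = map (\<lambda>i. oo + 2*i) [0..<d]"
proof (cases "e = 1")
  case True
  then show ?thesis using assms filt_even[of oo d] by simp
next
  case False
  then have e: "e = 0" using assms by simp
  obtain d' where d': "d = Suc d'" using assms by (cases d) auto
  have "oo + 2*d - 1 + e = Suc (oo + 2*d')" using e d' by simp
  then show ?thesis using assms filt_even[of oo d'] d' by (simp del: upt_Suc add: filter_upt_Suc) simp_all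
qed

lemma filt_odd_M:
  assumes "oo \<le> 1" "e \<le> 1" "d \<ge> 1"
  shows "filter (\<lambda>i. odd (i + oo)) [0..<oo + 2*d - 1 + e] =
     (if oo = 1 then [0] else []) @ map (\<lambda>i. oo + 2*i + 1) [0..<d - 1] @ (if e = 1 then [oo + 2*d - 1] else [])"
proof -
  obtain d' where d': "d = Suc d'" using assms by (cases d) auto
  show ?thesis
  proof (cases "e = 1")
    case True
    have "oo + 2*d - 1 + e = Suc (oo + 2*d' + 1)" using True d' by simp
    then show ?thesis using assms filt_odd[of oo d'] d' True
      by (simp del: upt_Suc add: filter_upt_Suc)
  next
    case False
    then have e: "e = 0" using assms by simp
    have "oo + 2*d - 1 + e = oo + 2*d' + 1" using e d' by simp
    then show ?thesis using assms filt_odd[of oo d'] d' e by simp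
  qed
qed

lemma upt_shift: "map (\<lambda>i. i + k) [a..<b] = [a+k..<b+k]"
  by (induct b) auto

lemma prod_insert:
  fixes s s' :: "nat \<Rightarrow> real"
  assumes E2: "\<And>i. E (Suc (Suc i)) = E i" and E1: "\<And>i. E (Suc i) = (\<not> E i)"
    and jM: "j \<le> M"
    and s'1: "\<And>i. i < j \<Longrightarrow> s' i = s i"
    and s'2: "s' j = r" "s' (Suc j) = r"
    and s'3: "\<And>i. j \<le> i \<Longrightarrow> s' (i + 2) = s i"
  shows "prod_list (map (\<lambda>i. lin (s' i)) (filter E [0..<M+2])) =
         lin r * prod_list (map (\<lambda>i. lin (s i)) (filter E [0..<M]))"
proof -
  have u: "[0..<M+2] = [0..<j] @ [j, Suc j] @ map (\<lambda>i. i+2) [j..<M]"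
  proof -
    have "[0..<M+2] = [0..<j] @ [j..<M+2]" using jM
      by (metis le0 le_add1 order_trans upt_add_eq_append add_diff_inverse_nat not_less)
    moreover have "[j..<M+2] = j # Suc j # [j+2..<M+2]" using jM
      by (simp add: upt_conv_Cons)
    moreover have "[j+2..<M+2] = map (\<lambda>i. i+2) [j..<M]" by (rule upt_shift[symmetric])
    ultimately show ?thesis by simp
  qed
  have u2: "[0..<M] = [0..<j] @ [j..<M]" using jM
    by (metis le0 upt_add_eq_append add_diff_inverse_nat not_less le_add1)
  have a: "map (\<lambda>i. lin (s' i)) (filter E [0..<j]) = map (\<lambda>i. lin (s i)) (filter E [0..<j])"
    by (rule map_cong) (auto simp: s'1)
  have E2': "\<And>i. E (i + 2) = E i" using E2 by simp
  have b: "map (\<lambda>i. lin (s' i)) (filter E (map (\<lambda>i. i+2) [j..<M])) = map (\<lambda>i. lin (s i)) (filter E [j..<M])"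
  proof -
    have s'3': "\<And>i. j \<le> i \<Longrightarrow> s' (Suc (Suc i)) = s i" using s'3 by simp
    show ?thesis by (simp add: filter_map comp_def E2) (auto simp: s'3')
  qed
  have c: "prod_list (map (\<lambda>i. lin (s' i)) (filter E [j, Suc j])) = lin r"
    using E1[of j] s'2 by (cases "E j") auto
  show ?thesis
    unfolding u u2 filter_append map_append prod_list.append a b c by (simp add: ac_simps)
qed

lemma chain_insert:
  assumes ch: "chain P Q oo e d s b" and d: "d \<ge> 1"
  shows "\<exists>s'. chain (lin r * P) (lin r * Q) oo e (Suc d) s' False"
proof -
  define M where "M = oo + 2*d - 1 + e"
  have M': "oo + 2 * Suc d - 1 + e = M + 2" using d by (simp add: M_def)
  have mono: "\<And>i j. i \<le> j \<Longrightarrow> j < M \<Longrightarrow> s i \<le> s j"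
    using ch unfolding chain_def M_def by (metis order_le_less)
  define j where "j = (LEAST i. i = M \<or> r \<le> s i)"
  have jM: "j \<le> M" unfolding j_def by (rule Least_le) simp
  have lt: "s i < r" if "i < j" for i
    using not_less_Least[OF that[unfolded j_def]] by auto
  have ge: "r \<le> s i" if "j \<le> i" "i < M" for i
  proof -
    have "j = M \<or> r \<le> s j" unfolding j_def by (rule LeastI[of _ M]) simp
    then show ?thesis using that mono[of j i] by auto
  qed
  define s' where "s' = (\<lambda>i. if i < j then s i else if i < j + 2 then r else s (i - 2))"
  have P1: "Pprod s' oo (M+2) = lin r * Pprod s oo M"
    unfolding Pprod_def by (rule prod_insert[OF _ _ jM]) (auto simp: s'_def)
  have Q1: "Qprod s' oo (M+2) = lin r * Qprod s oo M"
    unfolding Qprod_def by (rule prod_insert[OF _ _ jM]) (auto simp: s'_def)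
  have mono': "s' i \<le> s' i'" if "i < i'" "i' < M + 2" for i i'
  proof -
    consider "i' < j" | "i < j" "j \<le> i'" "i' < j + 2" | "i < j" "j + 2 \<le> i'"
      | "j \<le> i" "i' < j + 2" | "j \<le> i" "i < j + 2" "j + 2 \<le> i'" | "j + 2 \<le> i"
      by linarith
    then show ?thesis
    proof cases
      case 1 then show ?thesis using mono[of i i'] that jM by (simp add: s'_def)
    next
      case 2 then show ?thesis using lt[of i] by (simp add: s'_def)
    next
      case 3
      have "r \<le> s (i' - 2)" using 3 that by (intro ge) auto
      then show ?thesis using lt[of i] 3 by (simp add: s'_def)
    next
      case 4 then show ?thesis using that by (simp add: s'_def)
    next
      case 5 then show ?thesis using ge[of "i' - 2"] that by (simp add: s'_def)
    next
      case 6 then show ?thesis using mono[of "i - 2" "i' - 2"] that by (simp add: s'_def)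
    qed
  qed
  have "chain (lin r * P) (lin r * Q) oo e (Suc d) s' False"
  proof -
    have "Pprod s oo M dvd P" "Qprod s oo M dvd Q" using ch unfolding chain_def M_def by auto
    then show ?thesis unfolding chain_def M' using mono' P1 Q1 by (auto intro: mult_dvd_mono)
  qed
  then show ?thesis by blast
qed

lemma prod_list_lin_map: "prod_list (map (\<lambda>i. lin (s i)) xs) = (\<Prod>x\<leftarrow>map s xs. [:-x, 1:])"
  by (induct xs) (auto simp: lin_def)

lemma chain_concl:
  fixes ci cii :: bool
  defines "oo \<equiv> (if ci then 1 else 0::nat)" and "e \<equiv> (if cii then 1 else 0::nat)"
  assumes ch: "chain P Q oo e d s strict" and d: "d \<ge> 1" and st: "n0 = 0 \<longrightarrow> strict"
  shows "\<exists>mu nu nu0 nud.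
          length mu = d \<and> length nu = d - 1 \<and>
          roots_cm P mu \<and>
          roots_cm Q ((if ci then [nu0] else []) @ nu @ (if cii then [nud] else [])) \<and>
          (\<forall>i < d - 1. mu ! i \<le> nu ! i \<and> nu ! i \<le> mu ! (i + 1)) \<and>
          (n0 = 0 \<longrightarrow> (\<forall>i < d - 1. mu ! i < nu ! i \<and> nu ! i < mu ! (i + 1))) \<and>
          (ci \<longrightarrow> nu0 \<le> mu ! 0 \<and> (n0 = 0 \<longrightarrow> nu0 < mu ! 0)) \<and>
          (cii \<longrightarrow> mu ! (d - 1) \<le> nud \<and> (n0 = 0 \<longrightarrow> mu ! (d - 1) < nud))"
proof -
  define M where "M = oo + 2*d - 1 + e"
  have o1: "oo \<le> 1" and e1: "e \<le> 1" by (auto simp: oo_def e_def)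
  have mono: "\<And>i j. i < j \<Longrightarrow> j < M \<Longrightarrow> s i \<le> s j \<and> (strict \<longrightarrow> s i < s j)"
    using ch unfolding chain_def M_def by blast
  have Pd: "Pprod s oo M dvd P" and Qd: "Qprod s oo M dvd Q"
    using ch unfolding chain_def M_def by auto
  define mu where "mu = map (\<lambda>i. s (oo + 2*i)) [0..<d]"
  define nu where "nu = map (\<lambda>i. s (oo + 2*i + 1)) [0..<d - 1]"
  define nu0 where "nu0 = s 0"
  define nud where "nud = s (oo + 2*d - 1)"
  have "roots_cm P mu"
    using Pd unfolding roots_cm_def Pprod_def prod_list_lin_map M_def filt_even_M[OF o1 e1 d]
    by (simp add: mu_def comp_def)
  moreover have "roots_cm Q ((if ci then [nu0] else []) @ nu @ (if cii then [nud] else []))"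
  proof -
    have "map s (filter (\<lambda>i. odd (i + oo)) [0..<M]) =
      (if ci then [nu0] else []) @ nu @ (if cii then [nud] else [])"
      unfolding M_def filt_odd_M[OF o1 e1 d]
      by (simp add: nu_def nu0_def nud_def oo_def e_def comp_def)
    then show ?thesis using Qd unfolding roots_cm_def Qprod_def prod_list_lin_map by simp
  qed
  moreover have "\<forall>i < d - 1. (mu ! i \<le> nu ! i \<and> nu ! i \<le> mu ! (i + 1)) \<and>
      (strict \<longrightarrow> mu ! i < nu ! i \<and> nu ! i < mu ! (i + 1))"
  proof (intro allI impI)
    fix i assume i: "i < d - 1"
    have a: "mu ! i = s (oo + 2*i)" "nu ! i = s (oo + 2*i + 1)" "mu ! (i+1) = s (oo + 2*i + 2)"
      using i by (auto simp: mu_def nu_def)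
    have "oo + 2*i + 2 < M" using i by (simp add: M_def)
    then show "(mu ! i \<le> nu ! i \<and> nu ! i \<le> mu ! (i + 1)) \<and>
      (strict \<longrightarrow> mu ! i < nu ! i \<and> nu ! i < mu ! (i + 1))"
      unfolding a using mono[of "oo + 2*i" "oo + 2*i + 1"] mono[of "oo + 2*i + 1" "oo + 2*i + 2"]
      by auto
  qed
  moreover have "ci \<longrightarrow> nu0 \<le> mu ! 0 \<and> (strict \<longrightarrow> nu0 < mu ! 0)"
  proof
    assume ci
    then have "oo = 1" by (simp add: oo_def)
    moreover have "mu ! 0 = s oo" using d by (simp add: mu_def)
    moreover have "1 < M" using d \<open>oo = 1\<close> by (simp add: M_def)
    ultimately show "nu0 \<le> mu ! 0 \<and> (strict \<longrightarrow> nu0 < mu ! 0)"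
      using mono[of 0 1] by (simp add: nu0_def)
  qed
  moreover have "cii \<longrightarrow> mu ! (d - 1) \<le> nud \<and> (strict \<longrightarrow> mu ! (d - 1) < nud)"
  proof
    assume cii
    then have "e = 1" by (simp add: e_def)
    moreover have "mu ! (d - 1) = s (oo + 2*(d-1))" using d by (simp add: mu_def)
    moreover have "oo + 2*d - 1 < M" using d \<open>e = 1\<close> by (simp add: M_def)
    moreover have "oo + 2*(d-1) < oo + 2*d - 1" using d by simp
    ultimately show "mu ! (d - 1) \<le> nud \<and> (strict \<longrightarrow> mu ! (d - 1) < nud)"
      using mono[of "oo + 2*(d-1)" "oo + 2*d - 1"] by (simp add: nud_def)
  qed
  moreover have "length mu = d" "length nu = d - 1" by (auto simp: mu_def nu_def)
  ultimately show ?thesis using st by blast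
qed

lemma nroots_prod:
  fixes r :: "nat \<Rightarrow> complex"
  assumes fe: "f = (\<Prod>i<n. [:-r i, 1:])"
  shows "nroots_in f S = card {i. i<n \<and> r i \<in> S}"
proof -
  have f0: "f \<noteq> 0" unfolding fe by (subst prod_zero_iff) auto
  have pr: "proots f = (\<Sum>i<n. {#r i#})" unfolding fe
    by (subst proots_prod) auto
  have o: "order z f = card {i. i<n \<and> r i = z}" for z
  proof -
    have "order z f = count (proots f) z" using f0 by simp
    also have "\<dots> = (\<Sum>i<n. if r i = z then 1 else 0)" unfolding pr count_sum by (intro sum.cong) auto
    also have "\<dots> = card {i. i<n \<and> r i = z}"
      by (simp add: sum.If_cases Collect_conj_eq lessThan_def Int_commute)
    finally show ?thesis .
  qed
  define A where "A = {i. i<n \<and> r i \<in> S}"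
  have roots: "{z. poly f z = 0 \<and> z \<in> S} = r ` A"
    unfolding fe A_def by (auto simp: poly_prod prod_zero_iff)
  have "nroots_in f S = (\<Sum>z\<in>r ` A. card {i. i<n \<and> r i = z})"
    unfolding nroots_in_def roots o ..
  also have "\<dots> = (\<Sum>z\<in>r ` A. (\<Sum>x\<in>{x. x \<in> A \<and> r x = z}. 1))"
  proof (rule sum.cong)
    fix z assume "z \<in> r ` A"
    then have "{i. i<n \<and> r i = z} = {x. x \<in> A \<and> r x = z}" by (auto simp: A_def)
    then show "card {i. i<n \<and> r i = z} = (\<Sum>x\<in>{x. x \<in> A \<and> r x = z}. 1)" by simp
  qed simp
  also have "\<dots> = (\<Sum>x\<in>A. 1)"
    by (rule sum.group) (auto simp: A_def)
  finally show ?thesis by (simp add: A_def)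
qed

definition lev :: "nat \<Rightarrow> nat \<Rightarrow> real" where "lev K m = - pi * K + real m * pi / 2"

lemma lev_mono: "m < m' \<Longrightarrow> lev K m < lev K m'"
  by (simp add: lev_def divide_strict_right_mono)

lemma lev_mono': "m \<le> m' \<Longrightarrow> lev K m \<le> lev K m'"
  by (simp add: lev_def divide_right_mono)

lemma ivt_chain:
  fixes \<phi> :: "real \<Rightarrow> real"
  assumes cont: "continuous_on UNIV \<phi>" and K: "K \<ge> 1" and o1: "oo \<le> 1" and e1: "e \<le> 1"
    and H1: "eventually (\<lambda>x. \<phi> x < lev K (1 - oo)) at_bot"
    and H2: "eventually (\<lambda>x. \<phi> x > lev K (2*K - 1 + e)) at_top"
  shows "\<exists>s. (\<forall>a b. a < b \<and> b < oo + 2*K - 1 + e \<longrightarrow> s a < s b) \<and>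
             (\<forall>a < oo + 2*K - 1 + e. \<phi> (s a) = lev K (a + 1 - oo))"
proof -
  define M where "M = oo + 2*K - 1 + e"
  have last: "\<And>p. p < M \<Longrightarrow> p + 1 - oo \<le> 2*K - 1 + e" using K o1 by (auto simp: M_def)
  have getX: "\<exists>X. X \<ge> a \<and> \<phi> X > lev K (2*K - 1 + e)" for a
    using H2 unfolding eventually_at_top_linorder by (metis linorder_le_cases order_refl)
  have ivt: "\<exists>y. y \<ge> a \<and> \<phi> y = l" if "\<phi> a \<le> l" "l \<le> lev K (2*K - 1 + e)" for a l
  proof -
    obtain X where X: "X \<ge> a" "\<phi> X > lev K (2*K - 1 + e)" using getX by blast
    have "\<exists>y. a \<le> y \<and> y \<le> X \<and> \<phi> y = l"
      by (rule IVT') (use that X in \<open>auto intro: continuous_on_subset[OF cont]\<close>)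
    then show ?thesis by auto
  qed
  have main: "\<forall>p. p < M \<longrightarrow> (\<exists>s. (\<forall>a b. a < b \<and> b \<le> p \<longrightarrow> s a < s b) \<and>
             (\<forall>a \<le> p. \<phi> (s a) = lev K (a + 1 - oo)))"
  proof (intro allI)
    fix p show "p < M \<longrightarrow> (\<exists>s. (\<forall>a b. a < b \<and> b \<le> p \<longrightarrow> s a < s b) \<and>
             (\<forall>a \<le> p. \<phi> (s a) = lev K (a + 1 - oo)))"
    proof (induction p)
      case 0
      show ?case
      proof
        assume "0 < M"
        obtain x0 where x0: "\<phi> x0 < lev K (1 - oo)"
          using H1 unfolding eventually_at_bot_linorder by auto
        have "lev K (1 - oo) \<le> lev K (2*K - 1 + e)" using K by (intro lev_mono') auto
        then obtain y where "\<phi> y = lev K (1 - oo)" using ivt[of x0 "lev K (1 - oo)"] x0 by auto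
        then show "\<exists>s. (\<forall>a b. a < b \<and> b \<le> 0 \<longrightarrow> s a < s b) \<and>
             (\<forall>a \<le> 0. \<phi> (s a) = lev K (a + 1 - oo))"
          by (intro exI[of _ "\<lambda>_. y"]) auto
      qed
    next
      case (Suc p)
      show ?case
      proof
        assume p: "Suc p < M"
        then obtain s where s1: "\<forall>a b. a < b \<and> b \<le> p \<longrightarrow> s a < s b"
          and s2: "\<forall>a \<le> p. \<phi> (s a) = lev K (a + 1 - oo)" using Suc by auto
        have lt: "lev K (p + 1 - oo) < lev K (Suc p + 1 - oo)"
          using o1 by (intro lev_mono) auto
        have le: "lev K (Suc p + 1 - oo) \<le> lev K (2*K - 1 + e)"
          using last[OF p] by (intro lev_mono')
        obtain y where y: "y \<ge> s p" "\<phi> y = lev K (Suc p + 1 - oo)"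
          using ivt[of "s p" "lev K (Suc p + 1 - oo)"] s2 lt le by auto
        have "y \<noteq> s p" using y s2 lt by auto
        with y have y': "y > s p" by auto
        define s' where "s' = s(Suc p := y)"
        have "\<forall>a b. a < b \<and> b \<le> Suc p \<longrightarrow> s' a < s' b"
        proof (intro allI impI)
          fix a b assume ab: "a < b \<and> b \<le> Suc p"
          show "s' a < s' b"
          proof (cases "b = Suc p")
            case True
            then have "s a \<le> s p" using s1 ab by (cases "a = p") (auto simp: less_imp_le)
            then show ?thesis using True ab y' by (simp add: s'_def)
          next
            case False
            then show ?thesis using s1 ab by (simp add: s'_def)
          qed
        qed
        moreover have "\<forall>a \<le> Suc p. \<phi> (s' a) = lev K (a + 1 - oo)"
          using s2 y by (auto simp: s'_def le_Suc_eq)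
        ultimately show "\<exists>s. (\<forall>a b. a < b \<and> b \<le> Suc p \<longrightarrow> s a < s b) \<and>
             (\<forall>a \<le> Suc p. \<phi> (s a) = lev K (a + 1 - oo))" by blast
      qed
    qed
  qed
  have "M \<ge> 1" using K by (simp add: M_def)
  then obtain s where "\<forall>a b. a < b \<and> b \<le> M - 1 \<longrightarrow> s a < s b" "\<forall>a \<le> M - 1. \<phi> (s a) = lev K (a + 1 - oo)"
    using main[rule_format, of "M - 1"] by auto
  then show ?thesis unfolding M_def[symmetric] by (intro exI[of _ s]) auto
qed

definition th :: "complex \<Rightarrow> real \<Rightarrow> real" where
  "th z x = arctan ((x - Re z) / Im z) - sgn (Im z) * pi / 2"

lemma sqrt_aux: "v \<noteq> 0 \<Longrightarrow> sqrt (1 + (u / v)\<^sup>2) = sqrt (u\<^sup>2 + v\<^sup>2) / \<bar>v\<bar>"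
proof -
  assume v: "v \<noteq> 0"
  have "1 + (u / v)\<^sup>2 = (u\<^sup>2 + v\<^sup>2) / v\<^sup>2" using v by (simp add: field_simps power2_eq_square)
  then show ?thesis by (simp add: real_sqrt_divide)
qed

lemma th_cis:
  assumes "Im z \<noteq> 0"
  shows "complex_of_real x - z = complex_of_real (cmod (complex_of_real x - z)) * cis (th z x)"
proof -
  define u where "u = x - Re z"
  define v where "v = Im z"
  have v: "v \<noteq> 0" using assms by (simp add: v_def)
  have cm: "cmod (complex_of_real x - z) = sqrt (u\<^sup>2 + v\<^sup>2)"
    by (simp add: cmod_def u_def v_def power2_eq_square)
  have pos: "sqrt (u\<^sup>2 + v\<^sup>2) > 0" using v by (simp add: add_nonneg_pos)
  have c: "cos (th z x) = u / sqrt (u\<^sup>2 + v\<^sup>2)" and s: "sin (th z x) = - v / sqrt (u\<^sup>2 + v\<^sup>2)"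
  proof -
    have thd: "th z x = arctan (u / v) - sgn v * pi / 2" by (simp add: th_def u_def v_def)
    have ca: "cos (arctan (u / v)) = \<bar>v\<bar> / sqrt (u\<^sup>2 + v\<^sup>2)"
      unfolding cos_arctan sqrt_aux[OF v] by simp
    have sa: "sin (arctan (u / v)) = (u / v) * \<bar>v\<bar> / sqrt (u\<^sup>2 + v\<^sup>2)"
      unfolding sin_arctan sqrt_aux[OF v] by simp
    have "cos (th z x) = u / sqrt (u\<^sup>2 + v\<^sup>2) \<and> sin (th z x) = - v / sqrt (u\<^sup>2 + v\<^sup>2)"
    proof (cases "v > 0")
      case True
      have t: "th z x = arctan (u / v) - pi / 2" using True by (simp add: thd)
      have "cos (th z x) = sin (arctan (u / v))" "sin (th z x) = - cos (arctan (u / v))"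
        unfolding t by (simp_all add: cos_diff sin_diff)
      then show ?thesis using True pos
        by (simp add: ca sa field_simps)
    next
      case False
      then have vn: "v < 0" using v by simp
      have t: "th z x = arctan (u / v) + pi / 2" using vn by (simp add: thd)
      have "cos (th z x) = - sin (arctan (u / v))" "sin (th z x) = cos (arctan (u / v))"
        unfolding t by (simp_all add: cos_add sin_add)
      then show ?thesis using vn pos
        by (simp add: ca sa field_simps)
    qed
    then show "cos (th z x) = u / sqrt (u\<^sup>2 + v\<^sup>2)" "sin (th z x) = - v / sqrt (u\<^sup>2 + v\<^sup>2)" by auto
  qed
  show ?thesis unfolding cm
    by (simp add: complex_eq_iff c s u_def v_def pos[unfolded u_def v_def] less_imp_neq[OF pos[unfolded u_def v_def], symmetric] cis.sel)
qed

lemma poly_prod_polar: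
  fixes r :: "nat \<Rightarrow> complex"
  assumes "\<forall>i<n. Im (r i) \<noteq> 0"
  shows "poly (\<Prod>i<n. [:-r i, 1:]) (complex_of_real x) =
    complex_of_real (\<Prod>i<n. cmod (complex_of_real x - r i)) * cis (\<Sum>i<n. th (r i) x)"
  using assms
proof (induction n)
  case (Suc n)
  have "poly (\<Prod>i<Suc n. [:-r i, 1:]) (complex_of_real x) =
     poly (\<Prod>i<n. [:-r i, 1:]) (complex_of_real x) * (complex_of_real x - r n)"
    by (simp add: poly_prod algebra_simps)
  also have "\<dots> = complex_of_real (\<Prod>i<n. cmod (complex_of_real x - r i)) * cis (\<Sum>i<n. th (r i) x) *
     (complex_of_real (cmod (complex_of_real x - r n)) * cis (th (r n) x))"
    using Suc th_cis[of "r n" x] by simp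
  also have "\<dots> = complex_of_real (\<Prod>i<Suc n. cmod (complex_of_real x - r i)) * cis (\<Sum>i<Suc n. th (r i) x)"
    by (simp add: cis_mult[symmetric] ac_simps)
  finally show ?case .
qed simp

lemma lin_lim:
  fixes v c :: real
  shows "v > 0 \<Longrightarrow> filterlim (\<lambda>x. (x - c) / v) at_top at_top"
    and "v > 0 \<Longrightarrow> filterlim (\<lambda>x. (x - c) / v) at_bot at_bot"
    and "v < 0 \<Longrightarrow> filterlim (\<lambda>x. (x - c) / v) at_bot at_top"
    and "v < 0 \<Longrightarrow> filterlim (\<lambda>x. (x - c) / v) at_top at_bot"
proof -
  assume v: "v > 0"
  show "filterlim (\<lambda>x. (x - c) / v) at_top at_top"
    unfolding filterlim_at_top eventually_at_top_linorder
    by (intro allI exI[of _ "\<lambda>Z. Z * v + c"]) (use v in \<open>auto simp: field_simps\<close>)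
next
  assume v: "v > 0"
  show "filterlim (\<lambda>x. (x - c) / v) at_bot at_bot"
    unfolding filterlim_at_bot eventually_at_bot_linorder
    by (intro allI exI[of _ "\<lambda>Z. Z * v + c"]) (use v in \<open>auto simp: field_simps\<close>)
next
  assume v: "v < 0"
  show "filterlim (\<lambda>x. (x - c) / v) at_bot at_top"
    unfolding filterlim_at_bot eventually_at_top_linorder
    by (intro allI exI[of _ "\<lambda>Z. Z * v + c"]) (use v in \<open>auto simp: field_simps\<close>)
next
  assume v: "v < 0"
  show "filterlim (\<lambda>x. (x - c) / v) at_top at_bot"
    unfolding filterlim_at_top eventually_at_bot_linorder
    by (intro allI exI[of _ "\<lambda>Z. Z * v + c"]) (use v in \<open>auto simp: field_simps\<close>)
qed

lemma th_top: "Im z \<noteq> 0 \<Longrightarrow> ((\<lambda>x. th z x) \<longlongrightarrow> 0) at_top"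
proof -
  assume z: "Im z \<noteq> 0"
  show ?thesis
  proof (cases "Im z > 0")
    case True
    have "((\<lambda>x. arctan ((x - Re z) / Im z)) \<longlongrightarrow> pi/2) at_top"
      by (rule filterlim_compose[OF tendsto_arctan_at_top lin_lim(1)[OF True]])
    then have "((\<lambda>x. arctan ((x - Re z) / Im z) - sgn (Im z) * pi / 2) \<longlongrightarrow> pi/2 - 1 * pi / 2) at_top"
      using True by (intro tendsto_intros) auto
    then show ?thesis by (simp add: th_def[abs_def])
  next
    case False
    then have F: "Im z < 0" using z by simp
    have "((\<lambda>x. arctan ((x - Re z) / Im z)) \<longlongrightarrow> -(pi/2)) at_top"
      by (rule filterlim_compose[OF tendsto_arctan_at_bot lin_lim(3)[OF F]])
    then have "((\<lambda>x. arctan ((x - Re z) / Im z) - sgn (Im z) * pi / 2) \<longlongrightarrow> -(pi/2) - (-1) * pi / 2) at_top"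
      using F by (intro tendsto_intros) auto
    then show ?thesis by (simp add: th_def[abs_def])
  qed
qed

lemma th_bot: "Im z \<noteq> 0 \<Longrightarrow> ((\<lambda>x. th z x) \<longlongrightarrow> - sgn (Im z) * pi) at_bot"
proof -
  assume z: "Im z \<noteq> 0"
  show ?thesis
  proof (cases "Im z > 0")
    case True
    have "((\<lambda>x. arctan ((x - Re z) / Im z)) \<longlongrightarrow> -(pi/2)) at_bot"
      by (rule filterlim_compose[OF tendsto_arctan_at_bot lin_lim(2)[OF True]])
    then have "((\<lambda>x. arctan ((x - Re z) / Im z) - sgn (Im z) * pi / 2) \<longlongrightarrow> -(pi/2) - 1 * pi / 2) at_bot"
      using True by (intro tendsto_intros) auto
    then show ?thesis using True by (simp add: th_def[abs_def])
  next
    case False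
    then have F: "Im z < 0" using z by simp
    have "((\<lambda>x. arctan ((x - Re z) / Im z)) \<longlongrightarrow> pi/2) at_bot"
      by (rule filterlim_compose[OF tendsto_arctan_at_top lin_lim(4)[OF F]])
    then have "((\<lambda>x. arctan ((x - Re z) / Im z) - sgn (Im z) * pi / 2) \<longlongrightarrow> pi/2 - (-1) * pi / 2) at_bot"
      using F by (intro tendsto_intros) auto
    then show ?thesis using F by (simp add: th_def[abs_def])
  qed
qed

lemma th_cont: "Im z \<noteq> 0 \<Longrightarrow> continuous_on UNIV (\<lambda>x. th z x)"
  unfolding th_def by (intro continuous_intros) auto

lemma sign_arg1: "\<bar>e\<bar> < pi/2 \<Longrightarrow> sin (2*e) > 0 \<Longrightarrow> e > 0"
proof (rule ccontr)
  assume a: "\<bar>e\<bar> < pi/2" "sin (2*e) > 0" "\<not> e > 0"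
  then have "0 \<le> sin (-(2*e))" by (intro sin_ge_zero) auto
  then show False using a by simp
qed

lemma sign_arg2: "\<bar>e\<bar> < pi/2 \<Longrightarrow> sin (2*e) < 0 \<Longrightarrow> e < 0"
proof (rule ccontr)
  assume a: "\<bar>e\<bar> < pi/2" "sin (2*e) < 0" "\<not> e < 0"
  then have "0 \<le> sin (2*e)" by (intro sin_ge_zero) auto
  then show False using a by simp
qed

lemma sin2_shift: "sin (2 * (e - pi * of_int j)) = sin (2 * e)"
proof -
  have "2 * (e - pi * of_int j) = 2 * e + (2 * pi) * of_int (-j)" by (simp add: algebra_simps)
  then show ?thesis by (simp only: sin_add sin_int_2pin cos_int_2pin)
qed

lemma dvd_of_roots:
  fixes p :: "real poly"
  shows "distinct xs \<Longrightarrow> \<forall>x\<in>set xs. poly p x = 0 \<Longrightarrow> (\<Prod>x\<leftarrow>xs. [:-x, 1:]) dvd p"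
proof (induction xs arbitrary: p)
  case (Cons x xs)
  have "[:-x, 1:] dvd p" using Cons.prems by (simp add: poly_eq_0_iff_dvd)
  then obtain q where q: "p = [:-x, 1:] * q" by (elim dvdE)
  have "\<forall>y\<in>set xs. poly q y = 0" using Cons.prems unfolding q by auto
  then have "(\<Prod>x\<leftarrow>xs. [:-x, 1:]) dvd q" using Cons by auto
  then show ?case unfolding q by (simp del: mult_pCons_left add: mult_dvd_mono)
qed simp

lemma sum_ind_card: "(\<Sum>i<(n::nat). if Pr i then 1 else 0 :: real) = real (card {i. i < n \<and> Pr i})"
  by (induction n) (auto simp: less_Suc_eq Collect_disj_eq Collect_conj_eq card_insert_if)

lemma lev_cos: "odd m \<Longrightarrow> cos (lev K m) = 0"
proof -
  assume m: "odd m"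
  have "lev K m = of_int (int m - 2 * int K) * (pi/2)" by (simp add: lev_def algebra_simps)
  moreover have "odd (int m - 2 * int K)" using m by simp
  ultimately show ?thesis by (subst cos_zero_iff_int) blast
qed

lemma lev_sin: "even m \<Longrightarrow> sin (lev K m) = 0"
proof -
  assume m: "even m"
  then obtain j where j: "m = 2 * j" by (elim evenE)
  have "lev K m = of_int (int j - int K) * pi" by (simp add: lev_def algebra_simps j)
  then show ?thesis by (subst sin_zero_iff_int2) blast
qed

lemma poly_map_of_real: "poly (map_poly complex_of_real p) (complex_of_real x) = complex_of_real (poly p x)"
  by (induction p) (auto simp: map_poly_pCons)

definition cI :: "nat \<Rightarrow> nat \<Rightarrow> real poly \<Rightarrow> real poly \<Rightarrow> bool" where
  "cI np nm P Q = ((nm > np \<and> filterlim (\<lambda>x. poly P x / poly Q x) at_top at_bot) \<or>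
               (nm < np \<and> filterlim (\<lambda>x. poly P x / poly Q x) at_bot at_bot))"
definition cII :: "nat \<Rightarrow> nat \<Rightarrow> real poly \<Rightarrow> real poly \<Rightarrow> bool" where
  "cII np nm P Q = ((nm > np \<and> filterlim (\<lambda>x. poly P x / poly Q x) at_bot at_top) \<or>
                (nm < np \<and> filterlim (\<lambda>x. poly P x / poly Q x) at_top at_top))"

lemma core:
  fixes P Q :: "real poly" and r :: "nat \<Rightarrow> complex"
  assumes fe: "map_poly complex_of_real P + smult \<i> (map_poly complex_of_real Q) = (\<Prod>i<n. [:-r i, 1:])"
    and nr: "\<forall>i<n. Im (r i) \<noteq> 0"
    and npd: "np = card {i. i<n \<and> Im (r i) > 0}" and nmd: "nm = card {i. i<n \<and> Im (r i) < 0}"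
    and k: "np \<noteq> nm"
  shows "\<exists>s. chain P Q (if cI np nm P Q then 1 else 0) (if cII np nm P Q then 1 else 0)
                (nat \<bar>int np - int nm\<bar>) s True"
proof -
  define Rf where "Rf x = (\<Prod>i<n. cmod (complex_of_real x - r i))" for x
  define \<Theta> where "\<Theta> x = (\<Sum>i<n. th (r i) x)" for x
  have Rpos: "Rf x > 0" for x
    unfolding Rf_def
  proof (rule prod_pos)
    fix i assume "i \<in> {..<n}"
    then have "complex_of_real x - r i \<noteq> 0" using nr by (auto simp: complex_eq_iff)
    then show "cmod (complex_of_real x - r i) > 0" by simp
  qed
  have pe: "complex_of_real (poly P x) + \<i> * complex_of_real (poly Q x) = complex_of_real (Rf x) * cis (\<Theta> x)" for x
  proof -
    have "poly (\<Prod>i<n. [:-r i, 1:]) (complex_of_real x) = complex_of_real (poly P x) + \<i> * complex_of_real (poly Q x)"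
      unfolding fe[symmetric] by (simp add: poly_map_of_real)
    then show ?thesis using poly_prod_polar[OF nr, of x] unfolding Rf_def \<Theta>_def by simp
  qed
  have PR: "poly P x = Rf x * cos (\<Theta> x)" and QR: "poly Q x = Rf x * sin (\<Theta> x)" for x
    using arg_cong[OF pe[of x], of Re] arg_cong[OF pe[of x], of Im] by (simp_all add: cis.sel)
  have PQ: "poly P x * poly Q x = (Rf x)\<^sup>2 / 2 * sin (2 * \<Theta> x)" for x
    unfolding PR QR sin_double by (simp add: power2_eq_square)
  have PQpos: "sin (2 * \<Theta> x) > 0 \<longleftrightarrow> poly P x / poly Q x > 0" for x
  proof -
    have "poly P x / poly Q x > 0 \<longleftrightarrow> poly P x * poly Q x > 0"
      by (auto simp: zero_less_divide_iff zero_less_mult_iff)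
    also have "\<dots> \<longleftrightarrow> sin (2 * \<Theta> x) > 0" unfolding PQ using Rpos[of x]
      by (simp add: zero_less_mult_iff)
    finally show ?thesis by simp
  qed
  have PQneg: "sin (2 * \<Theta> x) < 0 \<longleftrightarrow> poly P x / poly Q x < 0" for x
  proof -
    have "poly P x / poly Q x < 0 \<longleftrightarrow> poly P x * poly Q x < 0"
      by (auto simp: divide_less_0_iff mult_less_0_iff)
    also have "\<dots> \<longleftrightarrow> sin (2 * \<Theta> x) < 0" unfolding PQ using Rpos[of x]
      by (simp add: mult_less_0_iff)
    finally show ?thesis by simp
  qed
  have cont: "continuous_on UNIV \<Theta>"
    unfolding \<Theta>_def[abs_def] using nr th_cont by (intro continuous_on_sum) auto
  define D where "D = real np - real nm"
  have sumsgn: "(\<Sum>i<n. sgn (Im (r i))) = D"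
  proof -
    have "(\<Sum>i<n. sgn (Im (r i))) = (\<Sum>i<n. (if Im (r i) > 0 then 1 else 0) - (if Im (r i) < 0 then 1 else 0 :: real))"
      by (intro sum.cong) (auto simp: sgn_real_def)
    also have "\<dots> = D" unfolding sum_subtractf sum_ind_card D_def npd nmd ..
    finally show ?thesis .
  qed
  have Ttop: "(\<Theta> \<longlongrightarrow> 0) at_top"
  proof -
    have "((\<lambda>x. \<Sum>i<n. th (r i) x) \<longlongrightarrow> (\<Sum>i<n. 0)) at_top"
      using nr th_top by (intro tendsto_sum) auto
    then show ?thesis by (simp add: \<Theta>_def[abs_def])
  qed
  have Tbot: "(\<Theta> \<longlongrightarrow> - pi * D) at_bot"
  proof -
    have "((\<lambda>x. \<Sum>i<n. th (r i) x) \<longlongrightarrow> (\<Sum>i<n. - sgn (Im (r i)) * pi)) at_bot"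
      using nr th_bot by (intro tendsto_sum) auto
    also have "(\<Sum>i<n. - sgn (Im (r i)) * pi) = - pi * D"
      using sumsgn by (simp add: sum_negf sum_distrib_left[symmetric] mult.commute)
    finally show ?thesis by (simp add: \<Theta>_def[abs_def])
  qed
  define \<sigma> where "\<sigma> = (if np > nm then 1 else -1 :: real)"
  define K where "K = nat \<bar>int np - int nm\<bar>"
  define oo where "oo = (if cI np nm P Q then 1 else 0::nat)"
  define e where "e = (if cII np nm P Q then 1 else 0::nat)"
  define M where "M = oo + 2*K - 1 + e"
  have K1: "K \<ge> 1" using k by (simp add: K_def)
  have KD: "real K = \<bar>D\<bar>" by (simp add: K_def D_def)
  have \<sigma>D: "\<sigma> * D = \<bar>D\<bar>" by (simp add: \<sigma>_def D_def)
  have \<sigma>2: "\<sigma> * \<sigma> = 1" by (simp add: \<sigma>_def)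
  define \<phi> where "\<phi> x = \<sigma> * \<Theta> x" for x
  have T\<phi>: "\<Theta> x = \<sigma> * \<phi> x" for x using \<sigma>2 by (simp add: \<phi>_def mult.assoc[symmetric])
  have cont\<phi>: "continuous_on UNIV \<phi>" unfolding \<phi>_def[abs_def] by (intro continuous_intros cont)
  have \<phi>top: "(\<phi> \<longlongrightarrow> 0) at_top"
    using tendsto_mult[OF tendsto_const[of \<sigma>] Ttop] by (simp add: \<phi>_def[abs_def])
  have \<phi>bot: "(\<phi> \<longlongrightarrow> - pi * K) at_bot"
  proof -
    have eq: "\<sigma> * (- pi * D) = - pi * K" using \<sigma>D KD by (simp add: algebra_simps)
    have "((\<lambda>x. \<sigma> * \<Theta> x) \<longlongrightarrow> \<sigma> * (- pi * D)) at_bot" by (rule tendsto_mult[OF tendsto_const Tbot])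
    then show ?thesis unfolding eq \<phi>_def[abs_def] .
  qed
  have Dint: "D = of_int (int np - int nm)" by (simp add: D_def)
  have evbot: "eventually (\<lambda>x. \<bar>\<Theta> x + pi * D\<bar> < pi/2) at_bot"
  proof -
    have "eventually (\<lambda>x. \<Theta> x > - pi * D - pi/2) at_bot" by (rule order_tendstoD(1)[OF Tbot]) simp
    moreover have "eventually (\<lambda>x. \<Theta> x < - pi * D + pi/2) at_bot" by (rule order_tendstoD(2)[OF Tbot]) simp
    ultimately show ?thesis
    proof eventually_elim
      case (elim x)
      have "- pi * D = - (pi * D)" by simp
      then show ?case using elim unfolding abs_less_iff by linarith
    qed
  qed
  have evtop: "eventually (\<lambda>x. \<bar>\<Theta> x\<bar> < pi/2) at_top"
  proof -
    have "eventually (\<lambda>x. \<Theta> x > - pi/2) at_top" by (rule order_tendstoD(1)[OF Ttop]) simp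
    moreover have "eventually (\<lambda>x. \<Theta> x < pi/2) at_top" by (rule order_tendstoD(2)[OF Ttop]) simp
    ultimately show ?thesis by eventually_elim (auto simp: abs_less_iff algebra_simps)
  qed
  have shiftb: "sin (2 * (\<Theta> x + pi * D)) = sin (2 * \<Theta> x)" for x
    using sin2_shift[of "\<Theta> x + pi * D" "int np - int nm"] Dint by simp
  have H1: "eventually (\<lambda>x. \<phi> x < lev K (1 - oo)) at_bot"
  proof (cases "cI np nm P Q")
    case False
    then have "lev K (1 - oo) = - pi * K + pi/2" by (simp add: oo_def lev_def)
    moreover have "eventually (\<lambda>x. \<phi> x < - pi * K + pi/2) at_bot"
      by (rule order_tendstoD(2)[OF \<phi>bot]) simp
    ultimately show ?thesis by simp
  next
    case True
    then have lv: "lev K (1 - oo) = - pi * K" by (simp add: oo_def lev_def)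
    from True consider "nm > np" "filterlim (\<lambda>x. poly P x / poly Q x) at_top at_bot"
      | "nm < np" "filterlim (\<lambda>x. poly P x / poly Q x) at_bot at_bot" unfolding cI_def by blast
    then show ?thesis
    proof cases
      case 1
      have "eventually (\<lambda>x. poly P x / poly Q x > 0) at_bot"
        using 1(2) unfolding filterlim_at_top_dense by blast
      with evbot show ?thesis
      proof eventually_elim
        case (elim x)
        then have "sin (2 * (\<Theta> x + pi * D)) > 0" using PQpos shiftb by simp
        then have "\<Theta> x + pi * D > 0" using elim sign_arg1 by blast
        moreover have "\<sigma> = -1" "D < 0" using 1 by (auto simp: \<sigma>_def D_def)
        ultimately show ?case unfolding lv \<phi>_def using KD by simp
      qed
    next
      case 2
      have "eventually (\<lambda>x. poly P x / poly Q x < 0) at_bot"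
        using 2(2) unfolding filterlim_at_bot_dense by blast
      with evbot show ?thesis
      proof eventually_elim
        case (elim x)
        then have "sin (2 * (\<Theta> x + pi * D)) < 0" using PQneg shiftb by simp
        then have "\<Theta> x + pi * D < 0" using elim sign_arg2 by blast
        moreover have "\<sigma> = 1" "D > 0" using 2 by (auto simp: \<sigma>_def D_def)
        ultimately show ?case unfolding lv \<phi>_def using KD by simp
      qed
    qed
  qed
  have H2: "eventually (\<lambda>x. \<phi> x > lev K (2*K - 1 + e)) at_top"
  proof (cases "cII np nm P Q")
    case False
    then have "lev K (2*K - 1 + e) = - pi/2" using K1 by (simp add: e_def lev_def of_nat_diff field_simps)
    moreover have "eventually (\<lambda>x. \<phi> x > - pi/2) at_top"
      by (rule order_tendstoD(1)[OF \<phi>top]) simp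
    ultimately show ?thesis by simp
  next
    case True
    then have lv: "lev K (2*K - 1 + e) = 0" using K1 by (simp add: e_def lev_def of_nat_diff field_simps)
    from True consider "nm > np" "filterlim (\<lambda>x. poly P x / poly Q x) at_bot at_top"
      | "nm < np" "filterlim (\<lambda>x. poly P x / poly Q x) at_top at_top" unfolding cII_def by blast
    then show ?thesis
    proof cases
      case 1
      have "eventually (\<lambda>x. poly P x / poly Q x < 0) at_top"
        using 1(2) unfolding filterlim_at_bot_dense by blast
      with evtop show ?thesis
      proof eventually_elim
        case (elim x)
        then have "\<Theta> x < 0" using elim PQneg sign_arg2 by blast
        moreover have "\<sigma> = -1" using 1 by (auto simp: \<sigma>_def)
        ultimately show ?case unfolding lv \<phi>_def by simp
      qed
    next
      case 2
      have "eventually (\<lambda>x. poly P x / poly Q x > 0) at_top"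
        using 2(2) unfolding filterlim_at_top_dense by blast
      with evtop show ?thesis
      proof eventually_elim
        case (elim x)
        then have "\<Theta> x > 0" using elim PQpos sign_arg1 by blast
        moreover have "\<sigma> = 1" using 2 by (auto simp: \<sigma>_def)
        ultimately show ?case unfolding lv \<phi>_def by simp
      qed
    qed
  qed
  have o1: "oo \<le> 1" and e1: "e \<le> 1" by (auto simp: oo_def e_def)
  obtain s where smono: "\<forall>a b. a < b \<and> b < M \<longrightarrow> s a < s b"
    and slev: "\<forall>a < M. \<phi> (s a) = lev K (a + 1 - oo)"
    using ivt_chain[OF cont\<phi> K1 o1 e1 H1 H2] unfolding M_def by blast
  have \<sigma>1: "\<sigma> = 1 \<or> \<sigma> = -1" by (simp add: \<sigma>_def)
  have inj: "inj_on s {..<M}"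
  proof (rule inj_onI)
    fix a b assume ab: "a \<in> {..<M}" "b \<in> {..<M}" "s a = s b"
    show "a = b"
      by (cases a b rule: linorder_cases) (use smono ab in \<open>fastforce+\<close>)
  qed
  have Proot: "poly P (s a) = 0" if "a < M" "even (a + oo)" for a
  proof -
    have "odd (a + 1 - oo)" using that o1 by (cases oo) auto
    then have "cos (lev K (a + 1 - oo)) = 0" by (rule lev_cos)
    then have "cos (\<Theta> (s a)) = 0" unfolding T\<phi> slev[rule_format, OF that(1)] using \<sigma>1 by auto
    then show ?thesis unfolding PR by simp
  qed
  have Qroot: "poly Q (s a) = 0" if "a < M" "odd (a + oo)" for a
  proof -
    have "even (a + 1 - oo)" using that o1 by (cases oo) auto
    then have "sin (lev K (a + 1 - oo)) = 0" by (rule lev_sin)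
    then have "sin (\<Theta> (s a)) = 0" unfolding T\<phi> slev[rule_format, OF that(1)] using \<sigma>1 by auto
    then show ?thesis unfolding QR by simp
  qed
  have dist: "distinct (map s (filter E [0..<M]))" for E
    by (intro distinct_map_filter) (simp add: distinct_map atLeast0LessThan inj)
  have "Pprod s oo M dvd P"
    unfolding Pprod_def prod_list_lin_map
    by (rule dvd_of_roots[OF dist]) (auto intro: Proot)
  moreover have "Qprod s oo M dvd Q"
    unfolding Qprod_def prod_list_lin_map
    by (rule dvd_of_roots[OF dist]) (auto intro: Qroot)
  ultimately have "chain P Q oo e K s True"
    unfolding chain_def M_def[symmetric] using smono by (auto simp: less_imp_le)
  then show ?thesis unfolding oo_def e_def K_def by blast
qed

lemma map_of_real_mult: "map_poly complex_of_real (a * b) = map_poly of_real a * map_poly of_real b"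
  by (rule poly_eqI) (simp add: coeff_map_poly coeff_mult)

lemma map_of_real_add: "map_poly complex_of_real (a + b) = map_poly of_real a + map_poly of_real b"
  by (rule poly_eqI) (simp add: coeff_map_poly)

lemma coeff_fP: "coeff (map_poly complex_of_real P + smult \<i> (map_poly complex_of_real Q)) k =
   complex_of_real (coeff P k) + \<i> * complex_of_real (coeff Q k)"
  by (simp add: coeff_map_poly)

lemma fP_deg:
  assumes "degree P = n" "lead_coeff P = 1" "degree Q < n"
  shows "degree (map_poly complex_of_real P + smult \<i> (map_poly complex_of_real Q)) = n"
    and "lead_coeff (map_poly complex_of_real P + smult \<i> (map_poly complex_of_real Q)) = 1"
proof -
  let ?f = "map_poly complex_of_real P + smult \<i> (map_poly complex_of_real Q)"
  have cn: "coeff ?f n = 1" unfolding coeff_fP using assms by (simp add: coeff_eq_0)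
  have "degree ?f \<le> n"
    by (rule degree_le) (use assms in \<open>auto simp: coeff_map_poly coeff_eq_0\<close>)
  moreover have "n \<le> degree ?f" by (metis cn le_degree one_neq_zero)
  ultimately show d: "degree ?f = n" by simp
  show "lead_coeff ?f = 1" using d cn by simp
qed

lemma nroots_proots:
  assumes "f \<noteq> 0"
  shows "nroots_in f S = size (filter_mset (\<lambda>z. z \<in> S) (proots f))"
proof -
  have "size (filter_mset (\<lambda>z. z \<in> S) (proots f)) =
    sum (count (filter_mset (\<lambda>z. z \<in> S) (proots f))) (set_mset (filter_mset (\<lambda>z. z \<in> S) (proots f)))"
    by (rule size_multiset_overloaded_eq)
  also have "set_mset (filter_mset (\<lambda>z. z \<in> S) (proots f)) = {z. poly f z = 0 \<and> z \<in> S}"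
    using assms by auto
  also have "sum (count (filter_mset (\<lambda>z. z \<in> S) (proots f))) {z. poly f z = 0 \<and> z \<in> S} =
     (\<Sum>z\<in>{z. poly f z = 0 \<and> z \<in> S}. order z f)"
    using assms by (intro sum.cong) auto
  finally show ?thesis unfolding nroots_in_def by simp
qed

lemma cI_cancel:
  assumes "lin x * P1 = P" "lin x * Q1 = Q"
  shows "cI np nm P Q = cI np nm P1 Q1" and "cII np nm P Q = cII np nm P1 Q1"
proof -
  have eq: "poly P y / poly Q y = poly P1 y / poly Q1 y" if "y \<noteq> x" for y
  proof -
    have a: "poly P y = (y - x) * poly P1 y" "poly Q y = (y - x) * poly Q1 y"
      unfolding assms[symmetric] lin_def by (simp_all add: algebra_simps)
    show ?thesis unfolding a using that by (simp add: mult_divide_mult_cancel_left)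
  qed
  have et: "eventually (\<lambda>y. poly P y / poly Q y = poly P1 y / poly Q1 y) at_top"
    unfolding eventually_at_top_linorder by (rule exI[of _ "x+1"]) (auto intro: eq)
  have eb: "eventually (\<lambda>y. poly P y / poly Q y = poly P1 y / poly Q1 y) at_bot"
    unfolding eventually_at_bot_linorder by (rule exI[of _ "x-1"]) (auto intro: eq)
  show "cI np nm P Q = cI np nm P1 Q1" unfolding cI_def
    using filterlim_cong[OF refl refl eb, of at_top] filterlim_cong[OF refl refl eb, of at_bot] by simp
  show "cII np nm P Q = cII np nm P1 Q1" unfolding cII_def
    using filterlim_cong[OF refl refl et, of at_top] filterlim_cong[OF refl refl et, of at_bot] by simp
qed

lemma decomp:
  assumes "degree P = n" "lead_coeff P = 1" "degree Q < n"
  shows "\<exists>r. map_poly complex_of_real P + smult \<i> (map_poly complex_of_real Q) = (\<Prod>i<n. [:-r i, 1:])"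
proof -
  let ?f = "map_poly complex_of_real P + smult \<i> (map_poly complex_of_real Q)"
  obtain r where "smult (lead_coeff ?f) (\<Prod>i<degree ?f. [:-r i, 1:]) = ?f"
    by (rule complex_poly_decompose')
  then show ?thesis by (metis fP_deg(1)[OF assms] fP_deg(2)[OF assms] smult_1_left)
qed

lemma card_split3:
  fixes r :: "nat \<Rightarrow> complex"
  shows "n = card {i. i<n \<and> Im (r i) > 0} + card {i. i<n \<and> Im (r i) < 0} + card {i. i<n \<and> Im (r i) = 0}"
proof -
  define A where "A = {i. i<n \<and> Im (r i) > 0}"
  define B where "B = {i. i<n \<and> Im (r i) < 0}"
  define C where "C = {i. i<n \<and> Im (r i) = 0}"
  have fin: "finite A" "finite B" "finite C" by (auto simp: A_def B_def C_def)
  have u: "A \<union> B \<union> C = {..<n}" by (auto simp: A_def B_def C_def)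
  have "card (A \<union> B) = card A + card B"
    by (rule card_Un_disjoint) (auto simp: fin A_def B_def)
  moreover have "card (A \<union> B \<union> C) = card (A \<union> B) + card C"
    by (rule card_Un_disjoint) (auto simp: fin A_def B_def C_def)
  ultimately have "card {..<n} = card A + card B + card C" unfolding u by simp
  then show ?thesis by (simp add: A_def B_def C_def)
qed

lemma gen:
  fixes n0 :: nat
  shows "\<And>n P Q np nm. degree P = n \<Longrightarrow> n \<ge> 1 \<Longrightarrow> lead_coeff P = 1 \<Longrightarrow> degree Q < n \<Longrightarrow>
     np = nroots_in (map_poly complex_of_real P + smult \<i> (map_poly complex_of_real Q)) {z. Im z > 0} \<Longrightarrow>
     nm = nroots_in (map_poly complex_of_real P + smult \<i> (map_poly complex_of_real Q)) {z. Im z < 0} \<Longrightarrow>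
     n0 = nroots_in (map_poly complex_of_real P + smult \<i> (map_poly complex_of_real Q)) {z. Im z = 0} \<Longrightarrow>
     n0 < n \<Longrightarrow> n - 2 * min np nm \<ge> 1 \<Longrightarrow>
     \<exists>s. chain P Q (if cI np nm P Q then 1 else 0) (if cII np nm P Q then 1 else 0) (n - 2 * min np nm) s (n0 = 0)"
proof (induction n0)
  case (0 n P Q np nm)
  obtain r where fe: "map_poly complex_of_real P + smult \<i> (map_poly complex_of_real Q) = (\<Prod>i<n. [:-r i, 1:])"
    using decomp 0 by blast
  have npd: "np = card {i. i<n \<and> Im (r i) > 0}" using 0(5) nroots_prod[OF fe] by simp
  have nmd: "nm = card {i. i<n \<and> Im (r i) < 0}" using 0(6) nroots_prod[OF fe] by simp
  have n0d: "card {i. i<n \<and> Im (r i) = 0} = 0" using 0(7) nroots_prod[OF fe] by simp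
  have nr: "\<forall>i<n. Im (r i) \<noteq> 0" using n0d by auto
  have nsum: "n = np + nm" using card_split3[of n r] npd nmd n0d by simp
  have d: "n - 2 * min np nm = nat \<bar>int np - int nm\<bar>" using nsum by auto
  have k: "np \<noteq> nm" using 0(9) nsum by auto
  show ?case unfolding d using core[OF fe nr npd nmd k] by simp
next
  case (Suc m n P Q np nm)
  let ?f = "map_poly complex_of_real P + smult \<i> (map_poly complex_of_real Q)"
  obtain r where fe: "?f = (\<Prod>i<n. [:-r i, 1:])"
    using decomp Suc by blast
  have n0d: "card {i. i<n \<and> Im (r i) = 0} = Suc m" using Suc(8) nroots_prod[OF fe] by simp
  then obtain i where i: "i < n" "Im (r i) = 0"
    by (metis (mono_tags, lifting) Collect_empty_eq card.empty nat.distinct(1))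
  define x where "x = Re (r i)"
  have rx: "r i = complex_of_real x" using i by (simp add: x_def complex_eq_iff)
  have "poly ?f (complex_of_real x) = 0" unfolding fe poly_prod using i rx
    by (auto simp: prod_zero_iff intro!: bexI[where x=i])
  then have "complex_of_real (poly P x) + \<i> * complex_of_real (poly Q x) = 0" by (simp add: poly_map_of_real)
  then have Px: "poly P x = 0" and Qx: "poly Q x = 0" by (simp_all add: complex_eq_iff)
  obtain P1 where P1: "P = lin x * P1" using Px unfolding lin_def by (metis poly_eq_0_iff_dvd dvdE)
  obtain Q1 where Q1: "Q = lin x * Q1" using Qx unfolding lin_def by (metis poly_eq_0_iff_dvd dvdE)
  have n2: "n \<ge> 2" using Suc by simp
  have P0: "P \<noteq> 0" using Suc by auto
  have lin0: "lin x \<noteq> 0" and dlin: "degree (lin x) = 1" and llin: "lead_coeff (lin x) = 1"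
    by (auto simp: lin_def)
  have P10: "P1 \<noteq> 0" using P0 P1 by auto
  have dP1: "degree P1 = n - 1" using Suc(2) P1 P10 lin0 dlin by (simp add: degree_mult_eq)
  have lP1: "lead_coeff P1 = 1" using Suc(4) P1 llin by (simp add: lead_coeff_mult)
  have dQ1: "degree Q1 < n - 1"
  proof (cases "Q1 = 0")
    case True then show ?thesis using n2 by simp
  next
    case False then show ?thesis using Suc(5) Q1 lin0 dlin by (simp add: degree_mult_eq)
  qed
  let ?f1 = "map_poly complex_of_real P1 + smult \<i> (map_poly complex_of_real Q1)"
  have ff1: "?f = [:- complex_of_real x, 1:] * ?f1"
  proof -
    have ml: "map_poly complex_of_real (lin x) = [:- complex_of_real x, 1:]" by (simp add: lin_def map_poly_pCons)
    show ?thesis unfolding P1 Q1 map_of_real_mult ml by (simp only: distrib_left mult_smult_right)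
  qed
  have f10: "?f1 \<noteq> 0" using fP_deg(2)[OF dP1 lP1 dQ1] by (metis leading_coeff_0_iff one_neq_zero)
  have nr1: "nroots_in ?f S = nroots_in ?f1 S + (if complex_of_real x \<in> S then 1 else 0)" for S
  proof -
    have "proots ?f = {#complex_of_real x#} + proots ?f1"
      unfolding ff1 using f10
      by (subst proots_mult) (auto simp: proots_linear_factor[of "- complex_of_real x", simplified])
    moreover have "?f \<noteq> 0" unfolding ff1 using f10 by (metis mult_eq_0_iff pCons_eq_0_iff one_neq_zero)
    ultimately show ?thesis using f10 by (simp add: nroots_proots)
  qed
  have np1: "np = nroots_in ?f1 {z. Im z > 0}" and nm1: "nm = nroots_in ?f1 {z. Im z < 0}"
    and m1: "m = nroots_in ?f1 {z. Im z = 0}"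
    using Suc(6,7,8) nr1 by auto
  have cc: "cI np nm P Q = cI np nm P1 Q1" "cII np nm P Q = cII np nm P1 Q1"
    using cI_cancel[OF P1[symmetric] Q1[symmetric]] by auto
  have nsum: "n = np + nm + Suc m"
  proof -
    have "np = card {i. i<n \<and> Im (r i) > 0}" "nm = card {i. i<n \<and> Im (r i) < 0}"
      using Suc(6,7) nroots_prod[OF fe] by simp_all
    then show ?thesis using card_split3[of n r] n0d by simp
  qed
  show ?case
  proof (cases "n - 1 - 2 * min np nm \<ge> 1")
    case True
    have "\<exists>s. chain P1 Q1 (if cI np nm P1 Q1 then 1 else 0) (if cII np nm P1 Q1 then 1 else 0)
        (n - 1 - 2 * min np nm) s (m = 0)"
      by (rule Suc.IH[OF dP1 _ lP1 dQ1 np1 nm1 m1 _ True]) (use Suc n2 in auto)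
    then obtain s where "chain P1 Q1 (if cI np nm P1 Q1 then 1 else 0) (if cII np nm P1 Q1 then 1 else 0)
        (n - 1 - 2 * min np nm) s (m = 0)" by blast
    from chain_insert[OF this True, of x] obtain s' where
      "chain (lin x * P1) (lin x * Q1) (if cI np nm P1 Q1 then 1 else 0) (if cII np nm P1 Q1 then 1 else 0)
        (Suc (n - 1 - 2 * min np nm)) s' False" by blast
    moreover have "Suc (n - 1 - 2 * min np nm) = n - 2 * min np nm" using True by simp
    ultimately show ?thesis unfolding cc P1[symmetric] Q1[symmetric] by auto
  next
    case False
    then have eq: "np = nm" "n - 2 * min np nm = 1" using nsum by auto
    have "\<not> cI np nm P Q" "\<not> cII np nm P Q" using eq by (auto simp: cI_def cII_def)
    moreover have "chain P Q 0 0 1 (\<lambda>_. x) False"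
      unfolding chain_def Pprod_def Qprod_def using P1 by auto
    ultimately show ?thesis unfolding eq(2) by auto
  qed
qed

lemma part1:
  assumes "n \<ge> 1" "degree P = n" "lead_coeff P = 1" "degree Q < n"
    "np = nroots_in (map_poly complex_of_real P + smult \<i> (map_poly complex_of_real Q)) {z. Im z > 0}"
    "nm = nroots_in (map_poly complex_of_real P + smult \<i> (map_poly complex_of_real Q)) {z. Im z < 0}"
    "n0 = nroots_in (map_poly complex_of_real P + smult \<i> (map_poly complex_of_real Q)) {z. Im z = 0}"
    "n0 < n"
  shows "interlace_concl n np nm n0 P Q"
proof (cases "n - 2 * min np nm \<ge> 1")
  case True
  obtain s where "chain P Q (if cI np nm P Q then 1 else 0) (if cII np nm P Q then 1 else 0) (n - 2 * min np nm) s (n0 = 0)"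
    using gen[OF assms(2,1,3,4,5,6,7,8) True] by blast
  from chain_concl[OF this True, of n0] show ?thesis
    unfolding interlace_concl_def Let_def cI_def[symmetric] cII_def[symmetric] by simp
next
  case False
  then have d: "n - 2 * min np nm = 0" by simp
  obtain r where fe: "map_poly complex_of_real P + smult \<i> (map_poly complex_of_real Q) = (\<Prod>i<n. [:-r i, 1:])"
    using decomp assms by blast
  have "n = np + nm + n0" using card_split3[of n r] assms(5,6,7) nroots_prod[OF fe] by simp
  then have "np = nm" using d by auto
  then have "\<not> cI np nm P Q" "\<not> cII np nm P Q" by (auto simp: cI_def cII_def)
  then show ?thesis unfolding interlace_concl_def Let_def cI_def[symmetric] cII_def[symmetric] d
    by (intro exI[of _ "[]"]) (auto simp: roots_cm_def)
qed

lemma ci_neg: "cI nm np P (-Q) = cI np nm P Q" "cII nm np P (-Q) = cII np nm P Q"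
proof -
  have e: "(\<lambda>x. poly P x / poly (-Q) x) = (\<lambda>x. - (poly P x / poly Q x))" by auto
  show "cI nm np P (-Q) = cI np nm P Q" unfolding cI_def e
    using filterlim_uminus_at_bot[of "\<lambda>x. poly P x / poly Q x" at_bot]
      filterlim_uminus_at_top[of "\<lambda>x. poly P x / poly Q x" at_bot] by auto
  show "cII nm np P (-Q) = cII np nm P Q" unfolding cII_def e
    using filterlim_uminus_at_bot[of "\<lambda>x. poly P x / poly Q x" at_top]
      filterlim_uminus_at_top[of "\<lambda>x. poly P x / poly Q x" at_top] by auto
qed

lemma concl_neg: "interlace_concl n nm np n0 P (-Q) = interlace_concl n np nm n0 P Q"
  unfolding interlace_concl_def Let_def cI_def[symmetric] cII_def[symmetric] ci_neg roots_cm_def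
    dvd_minus_iff min.commute[of nm np] ..

lemma mi_pow: "(-\<i>) ^ k = (if even k then (-1) ^ (k div 2) else - \<i> * (-1) ^ (k div 2) :: complex)"
proof (cases "even k")
  case True
  then obtain q where k: "k = 2 * q" by (elim evenE)
  have "(-\<i>) ^ k = ((-\<i>)^2) ^ q" unfolding k by (simp add: power_mult)
  then show ?thesis using k by simp
next
  case False
  then obtain q where k: "k = 2 * q + 1" by (elim oddE)
  have "(-\<i>) ^ k = ((-\<i>)^2) ^ q * (-\<i>)" unfolding k by (simp add: power_mult power_add)
  then show ?thesis using k by simp
qed

lemma map_sum: "map_poly complex_of_real (sum F A) = (\<Sum>k\<in>A. map_poly complex_of_real (F k))"
  by (rule poly_eqI) (simp add: coeff_map_poly coeff_sum)

lemma poly_even: "poly (map_poly complex_of_real (even_part n f)) z =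
  (\<Sum>k\<in>{0..n}. if even k then complex_of_real ((-1) ^ (k div 2) * coeff f (n-k)) * z ^ (n-k) else 0)"
  unfolding even_part_def map_sum poly_sum by (intro sum.cong) (auto simp: map_poly_monom poly_monom)

lemma poly_odd: "poly (map_poly complex_of_real (odd_part n f)) z =
  (\<Sum>k\<in>{0..n}. if odd k then complex_of_real ((-1) ^ (k div 2) * coeff f (n-k)) * z ^ (n-k) else 0)"
  unfolding odd_part_def map_sum poly_sum by (intro sum.cong) (auto simp: map_poly_monom poly_monom)

lemma h_poly: "poly (map_poly complex_of_real (even_part n f) - smult \<i> (map_poly complex_of_real (odd_part n f))) z =
   (\<Sum>k\<in>{0..n}. complex_of_real (coeff f (n-k)) * z ^ (n-k) * (-\<i>) ^ k)"
  unfolding poly_diff poly_smult poly_even poly_odd sum_distrib_left sum_subtractf[symmetric]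
  by (intro sum.cong) (auto simp: mi_pow)

lemma g_poly:
  assumes "degree f = n"
  shows "(-\<i>) ^ n * poly (map_poly complex_of_real f) (\<i> * z) =
   (\<Sum>k\<in>{0..n}. complex_of_real (coeff f (n-k)) * z ^ (n-k) * (-\<i>) ^ k)"
proof -
  have dg: "degree (map_poly complex_of_real f) = n" using assms by (simp add: degree_map_poly)
  have "(-\<i>) ^ n * poly (map_poly complex_of_real f) (\<i> * z) =
     (\<Sum>j\<in>{0..n}. (-\<i>) ^ n * (complex_of_real (coeff f j) * (\<i> * z) ^ j))"
    unfolding poly_altdef dg sum_distrib_left atLeast0AtMost by (simp add: coeff_map_poly)
  also have "\<dots> = (\<Sum>k\<in>{0..n}. (-\<i>) ^ n * (complex_of_real (coeff f (n - k)) * (\<i> * z) ^ (n - k)))"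
    by (subst sum.atLeastAtMost_rev) simp
  also have "\<dots> = (\<Sum>k\<in>{0..n}. complex_of_real (coeff f (n-k)) * z ^ (n-k) * (-\<i>) ^ k)"
  proof (intro sum.cong refl)
    fix k assume "k \<in> {0..n}"
    then have nk: "n = k + (n - k)" by simp
    have "(-\<i>) ^ n = (-\<i>) ^ k * (-\<i>) ^ (n - k)" by (subst nk) (simp add: power_add)
    moreover have "(-\<i>) ^ (n - k) * \<i> ^ (n - k) = (1::complex)"
      by (simp add: power_mult_distrib[symmetric])
    ultimately show "(-\<i>) ^ n * (complex_of_real (coeff f (n - k)) * (\<i> * z) ^ (n - k)) =
        complex_of_real (coeff f (n-k)) * z ^ (n-k) * (-\<i>) ^ k"
      by (simp add: power_mult_distrib algebra_simps)
  qed
  finally show ?thesis .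
qed

lemma part2:
  fixes f :: "real poly"
  assumes n1: "n \<ge> 1" and df: "degree f = n" and lf: "lead_coeff f = 1"
    and npd: "np = nroots_in (map_poly complex_of_real f) {z. Re z > 0}"
    and nmd: "nm = nroots_in (map_poly complex_of_real f) {z. Re z < 0}"
    and n0d: "n0 = nroots_in (map_poly complex_of_real f) {z. Re z = 0}"
    and n0n: "n0 < n"
  shows "interlace_concl n np nm n0 (even_part n f) (odd_part n f)"
proof -
  define P where "P = even_part n f"
  define Q where "Q = odd_part n f"
  let ?g = "map_poly complex_of_real f"
  obtain w where gw0: "map_poly complex_of_real f + smult \<i> (map_poly complex_of_real 0) = (\<Prod>i<n. [:-w i, 1:])"
    using decomp[OF df lf, of 0] n1 by auto
  have gw: "?g = (\<Prod>i<n. [:-w i, 1:])" using gw0 by simp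
  let ?h = "map_poly complex_of_real P + smult \<i> (map_poly complex_of_real (-Q))"
  have mneg: "map_poly complex_of_real (-Q) = - map_poly complex_of_real Q"
    by (rule poly_eqI) (simp add: coeff_map_poly)
  have hw: "?h = (\<Prod>i<n. [:-(-\<i> * w i), 1:])"
  proof -
    have "poly ?h z = poly (\<Prod>i<n. [:-(-\<i> * w i), 1:]) z" for z
    proof -
      have "poly ?h z = (-\<i>) ^ n * poly ?g (\<i> * z)"
        using h_poly[of n f z] g_poly[OF df, of z] unfolding mneg unfolding P_def Q_def by simp
      also have "\<dots> = (\<Prod>i<n. (-\<i>)) * (\<Prod>i<n. \<i> * z - w i)"
        unfolding gw by (simp add: poly_prod)
      also have "\<dots> = (\<Prod>i<n. z - (-\<i> * w i))"
        unfolding prod.distrib[symmetric] by (intro prod.cong) (auto simp: algebra_simps)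
      also have "\<dots> = poly (\<Prod>i<n. [:-(-\<i> * w i), 1:]) z" by (simp add: poly_prod add.commute)
      finally show ?thesis .
    qed
    then show ?thesis using poly_eq_poly_eq_iff by blast
  qed
  have dh: "degree ?h = n" unfolding hw by (subst degree_prod_sum_eq) auto
  have lh: "lead_coeff ?h = 1" unfolding hw by (simp add: lead_coeff_prod)
  have ch0: "coeff ?h j = 0" if "j > n" for j using that dh coeff_eq_0 by metis
  have chn: "coeff ?h n = 1" using lh dh by simp
  have cPQ: "coeff ?h j = complex_of_real (coeff P j) - \<i> * complex_of_real (coeff Q j)" for j
    by (simp add: coeff_map_poly)
  have cz: "coeff P j = 0 \<and> coeff Q j = 0" if "j > n" for j
    using ch0[OF that] unfolding cPQ by (simp add: complex_eq_iff)
  have cn: "coeff P n = 1 \<and> coeff Q n = 0"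
    using chn unfolding cPQ by (simp add: complex_eq_iff)
  have dP: "degree P = n"
  proof (rule antisym)
    show "degree P \<le> n" by (rule degree_le) (simp add: cz)
    show "n \<le> degree P" by (rule le_degree) (simp add: cn)
  qed
  have lP: "lead_coeff P = 1" using dP cn by simp
  have dQ: "degree (-Q) < n"
  proof -
    have "degree (-Q) \<le> n - 1"
    proof (rule degree_le, intro allI impI)
      fix j assume "n - 1 < j"
      then have "j = n \<or> j > n" using n1 by auto
      then show "coeff (-Q) j = 0" using cz[of j] cn by auto
    qed
    then show ?thesis using n1 by simp
  qed
  have hr: "nroots_in ?h S = card {i. i<n \<and> -\<i> * w i \<in> S}" for S by (rule nroots_prod[OF hw])
  have gr: "nroots_in ?g S = card {i. i<n \<and> w i \<in> S}" for S by (rule nroots_prod[OF gw])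
  have "interlace_concl n nm np n0 P (-Q)"
  proof (rule part1[OF n1 dP lP dQ])
    show "nm = nroots_in ?h {z. Im z > 0}" unfolding hr nmd gr by simp
    show "np = nroots_in ?h {z. Im z < 0}" unfolding hr npd gr by simp
    show "n0 = nroots_in ?h {z. Im z = 0}" unfolding hr n0d gr by simp
  qed (rule n0n)
  then show ?thesis unfolding concl_neg P_def Q_def .
qed

theorem mainTheorem3:
  shows
  "(\<forall>(n::nat) (P::real poly) (Q::real poly) np nm n0.
      let f = map_poly complex_of_real P + smult \<i> (map_poly complex_of_real Q) in
      n \<ge> 1 \<and> degree P = n \<and> lead_coeff P = 1 \<and> degree Q < n \<and>
      np = nroots_in f {z. Im z > 0} \<and> nm = nroots_in f {z. Im z < 0} \<and>
      n0 = nroots_in f {z. Im z = 0} \<and> n0 < n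
      \<longrightarrow> interlace_concl n np nm n0 P Q)
   \<and>
   (\<forall>(n::nat) (f::real poly) np nm n0.
      let g = map_poly complex_of_real f in
      n \<ge> 1 \<and> degree f = n \<and> lead_coeff f = 1 \<and>
      np = nroots_in g {z. Re z > 0} \<and> nm = nroots_in g {z. Re z < 0} \<and>
      n0 = nroots_in g {z. Re z = 0} \<and> n0 < n
      \<longrightarrow> interlace_concl n np nm n0 (even_part n f) (odd_part n f))"
  unfolding Let_def
proof (intro conjI allI impI)
  fix n P Q np nm n0
  assume h: "n \<ge> 1 \<and> degree P = n \<and> lead_coeff P = 1 \<and> degree Q < n \<and>
      np = nroots_in (map_poly complex_of_real P + smult \<i> (map_poly complex_of_real Q)) {z. Im z > 0} \<and>
      nm = nroots_in (map_poly complex_of_real P + smult \<i> (map_poly complex_of_real Q)) {z. Im z < 0} \<and>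
      n0 = nroots_in (map_poly complex_of_real P + smult \<i> (map_poly complex_of_real Q)) {z. Im z = 0} \<and> n0 < n"
  show "interlace_concl n np nm n0 P Q"
    using h by (elim conjE) (rule part1)
next
  fix n f np nm n0
  assume h: "n \<ge> 1 \<and> degree f = n \<and> lead_coeff f = 1 \<and>
      np = nroots_in (map_poly complex_of_real f) {z. Re z > 0} \<and>
      nm = nroots_in (map_poly complex_of_real f) {z. Re z < 0} \<and>
      n0 = nroots_in (map_poly complex_of_real f) {z. Re z = 0} \<and> n0 < n"
  show "interlace_concl n np nm n0 (even_part n f) (odd_part n f)"
    using h by (elim conjE) (rule part2)
qed

end
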